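(* Let $d\ge1$ and let $\Lambda\subset\mathbb R^d$ be a full-rank lattice with successive minima $\delta_1,\dots,\delta_d$. Then there exists a basis $\boldsymbol v^1,\dots,\boldsymbol v^d$ of $\Lambda$ such that (i) $|\boldsymbol v^s|_2\ll_d\delta_s$ for $s=1,\dots,d$; (ii) $\mathfrak I(\boldsymbol v^s)\subseteq\mathfrak I(\boldsymbol v^{s+1})$ for $s=1,\dots,d-1$.
   Context: For $\boldsymbol v\in\mathbb R^d$, $\mathfrak I(\boldsymbol v):=\{h\in\{1,\dots,d\}: v_h\neq0\}$ is its support. $|\cdot|_2$ is the Euclidean norm. The $s$-th successive minimum of $\Lambda$ is the least $r>0$ such that the Euclidean ball of radius $r$ centred at $0$ contains $s$ linearly independent vectors of $\Lambda$. *)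

theory Defs
  imports "HOL-Analysis.Analysis"
begin

definition supp_vec :: "real^'n \<Rightarrow> 'n set" where
  "supp_vec v = {h. v $ h \<noteq> 0}"

definition lattice_basis :: "(real^'n) set \<Rightarrow> (nat \<Rightarrow> real^'n) \<Rightarrow> bool" where
  "lattice_basis L b \<longleftrightarrow>
     inj_on b {1..CARD('n)} \<and> independent (b ` {1..CARD('n)}) \<and>
     L = {(\<Sum>s=1..CARD('n). of_int (k s) *\<^sub>R b s) | k. True}"

definition full_rank_lattice :: "(real^'n) set \<Rightarrow> bool" where
  "full_rank_lattice L \<longleftrightarrow> (\<exists>b. lattice_basis L b)"

definition succ_min :: "(real^'n) set \<Rightarrow> nat \<Rightarrow> real" where
  "succ_min L s = Inf {r. r > 0 \<and> (\<exists>S. S \<subseteq> L \<inter> cball 0 r \<and> independent S \<and> card S = s)}"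

end

theory Submission
  imports Defs
begin


definition intspan :: "(nat \<Rightarrow> real^'n) \<Rightarrow> (real^'n) set" where
  "intspan b = {(\<Sum>s=1..CARD('n). of_int (k s) *\<^sub>R b s) | k. True}"

lemma lattice_basis_alt: fixes b :: "nat \<Rightarrow> real^'n" shows "lattice_basis L b \<longleftrightarrow>
     inj_on b {1..CARD('n)} \<and> independent (b ` {1..CARD('n)}) \<and> L = intspan b"
  unfolding lattice_basis_def intspan_def by simp

lemma intspan_0: fixes b :: "nat \<Rightarrow> real^'n" shows "0 \<in> intspan b"
  unfolding intspan_def by (rule CollectI, rule exI[of _ "\<lambda>_. 0"]) simp

lemma intspan_add: fixes b :: "nat \<Rightarrow> real^'n" shows "x \<in> intspan b \<Longrightarrow> y \<in> intspan b \<Longrightarrow> x + y \<in> intspan b"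
proof -
  assume "x \<in> intspan b" "y \<in> intspan b"
  then obtain k1 k2 where "x = (\<Sum>s=1..CARD('n). of_int (k1 s) *\<^sub>R b s)"
    "y = (\<Sum>s=1..CARD('n). of_int (k2 s) *\<^sub>R b s)" unfolding intspan_def by blast
  then have "x + y = (\<Sum>s=1..CARD('n). of_int ((\<lambda>s. k1 s + k2 s) s) *\<^sub>R b s)"
    by (simp add: sum.distrib scaleR_add_left)
  then show ?thesis unfolding intspan_def by (intro CollectI exI[of _ "\<lambda>s. k1 s + k2 s"]) simp
qed

lemma intspan_scale: fixes b :: "nat \<Rightarrow> real^'n" shows "x \<in> intspan b \<Longrightarrow> of_int m *\<^sub>R x \<in> intspan b"
proof -
  assume "x \<in> intspan b"
  then obtain k where "x = (\<Sum>s=1..CARD('n). of_int (k s) *\<^sub>R b s)"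
    unfolding intspan_def by blast
  then have "of_int m *\<^sub>R x = (\<Sum>s=1..CARD('n). of_int ((\<lambda>s. m * k s) s) *\<^sub>R b s)"
    by (simp add: scaleR_sum_right)
  then show ?thesis unfolding intspan_def by (intro CollectI exI[of _ "\<lambda>s. m * k s"]) simp
qed

lemma intspan_diff: fixes b :: "nat \<Rightarrow> real^'n" shows "x \<in> intspan b \<Longrightarrow> y \<in> intspan b \<Longrightarrow> x - y \<in> intspan b"
  using intspan_add[of x b "of_int (-1) *\<^sub>R y"] intspan_scale[of y b "-1"] by simp

lemma intspan_gen: "s \<in> {1..CARD('n)} \<Longrightarrow> b s \<in> intspan (b :: nat \<Rightarrow> real^'n)"
proof -
  assume s: "s \<in> {1..CARD('n)}"
  have "(\<Sum>t=1..CARD('n). of_int ((\<lambda>t. if t = s then 1 else 0) t) *\<^sub>R b t) = b s"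
  proof -
    have "(\<Sum>t=1..CARD('n). of_int ((\<lambda>t. if t = s then 1 else 0) t) *\<^sub>R b t) = (\<Sum>t=1..CARD('n). (if t = s then b t else 0))"
      by (rule sum.cong) auto
    also have "\<dots> = b s" using s by (simp add: sum.delta)
    finally show ?thesis .
  qed
  then show ?thesis unfolding intspan_def by (intro CollectI exI[of _ "\<lambda>t. if t = s then 1 else 0"]) simp
qed

lemma intspan_sum: fixes b :: "nat \<Rightarrow> real^'n" shows "finite A \<Longrightarrow> (\<forall>i\<in>A. f i \<in> intspan b) \<Longrightarrow> sum f A \<in> intspan b"
  by (induction A rule: finite_induct) (auto intro: intspan_0 intspan_add)

lemma intspan_subset:
  assumes "\<forall>s\<in>{1..CARD('n)}. a s \<in> intspan (b :: nat \<Rightarrow> real^'n)"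
  shows "intspan a \<subseteq> intspan b"
proof
  fix x assume "x \<in> intspan a"
  then obtain k where x: "x = (\<Sum>s=1..CARD('n). of_int (k s) *\<^sub>R a s)"
    unfolding intspan_def by blast
  have "\<forall>s\<in>{1..CARD('n)}. of_int (k s) *\<^sub>R a s \<in> intspan b" using assms by (simp add: intspan_scale)
  then show "x \<in> intspan b" unfolding x by (rule intspan_sum[OF finite_atLeastAtMost])
qed

lemma intspan_span: fixes b :: "nat \<Rightarrow> real^'n" shows "intspan b \<subseteq> span (b ` {1..CARD('n)})"
proof
  fix x assume "x \<in> intspan b"
  then obtain k where x: "x = (\<Sum>s=1..CARD('n). of_int (k s) *\<^sub>R b s)"
    unfolding intspan_def by blast
  have "of_int (k s) *\<^sub>R b s \<in> span (b ` {1..CARD('n)})" if "s \<in> {1..CARD('n)}" for s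
    by (rule span_scale, rule span_base) (use that in auto)
  then show "x \<in> span (b ` {1..CARD('n)})" unfolding x by (intro span_sum) auto
qed

lemma span_basis_UNIV:
  fixes b :: "nat \<Rightarrow> real^'n"
  assumes "inj_on b {1..CARD('n)}" "independent (b ` {1..CARD('n)})"
  shows "span (b ` {1..CARD('n)}) = UNIV"
proof -
  have "card (b ` {1..CARD('n)}) = CARD('n)" using assms(1) by (simp add: card_image)
  then have "UNIV \<subseteq> span (b ` {1..CARD('n)})"
    using card_ge_dim_independent[OF _ assms(2), of UNIV] by simp
  then show ?thesis by auto
qed

lemma basis_from_spanning:
  fixes a b :: "nat \<Rightarrow> real^'n"
  assumes "lattice_basis L b" "L = intspan a"
  shows "lattice_basis L a"
proof -
  have b: "inj_on b {1..CARD('n)}" "independent (b ` {1..CARD('n)})" "L = intspan b"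
    using assms(1) unfolding lattice_basis_alt by auto
  have "b ` {1..CARD('n)} \<subseteq> span (a ` {1..CARD('n)})"
    using intspan_gen[of _ b] b(3) assms(2) intspan_span[of a] by blast
  then have "span (b ` {1..CARD('n)}) \<subseteq> span (a ` {1..CARD('n)})"
    by (simp add: span_minimal)
  then have sp: "span (a ` {1..CARD('n)}) = UNIV" using span_basis_UNIV[OF b(1,2)] by auto
  have cle: "card (a ` {1..CARD('n)}) \<le> CARD('n)"
    using card_image_le[of "{1..CARD('n)}" a] by simp
  have ind: "independent (a ` {1..CARD('n)})"
    by (rule card_le_dim_spanning[of _ UNIV]) (use sp cle in auto)
  have "CARD('n) \<le> card (a ` {1..CARD('n)})"
    using sp
    using span_card_ge_dim[of "a ` {1..CARD('n)}" UNIV] by simp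
  then have "card (a ` {1..CARD('n)}) = card {1..CARD('n)}" using cle by simp
  then have "inj_on a {1..CARD('n)}" by (simp add: eq_card_imp_inj_on)
  then show ?thesis unfolding lattice_basis_alt using ind assms(2) by auto
qed

lemma coords_exist:
  fixes b :: "nat \<Rightarrow> real^'n"
  assumes inj: "inj_on b {1..CARD('n)}" and ind: "independent (b ` {1..CARD('n)})"
  shows "\<exists>c. (\<forall>x. x = (\<Sum>s=1..CARD('n). c x s *\<^sub>R b s)) \<and>
    (\<forall>x k. x = (\<Sum>s=1..CARD('n). k s *\<^sub>R b s) \<longrightarrow> (\<forall>s\<in>{1..CARD('n)}. k s = c x s))"
proof -
  let ?I = "{1..CARD('n)}"
  have ex: "\<exists>k. x = (\<Sum>s\<in>?I. k s *\<^sub>R b s)" for x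
  proof -
    have "x \<in> span (b ` ?I)" using span_basis_UNIV[OF inj ind] by simp
    then obtain u where "x = (\<Sum>v\<in>b ` ?I. u v *\<^sub>R v)" using span_finite[of "b ` ?I"] by auto
    also have "\<dots> = (\<Sum>s\<in>?I. u (b s) *\<^sub>R b s)" using sum.reindex[OF inj] by simp
    finally show ?thesis by (rule exI[of _ "\<lambda>s. u (b s)"])
  qed
  then obtain c where c: "\<And>x. x = (\<Sum>s\<in>?I. c x s *\<^sub>R b s)" by metis
  have uniq: "\<forall>s\<in>?I. k s = k' s" if "(\<Sum>s\<in>?I. k s *\<^sub>R b s) = (\<Sum>s\<in>?I. k' s *\<^sub>R b s)" for k k'
  proof (rule ccontr)
    assume "\<not> ?thesis"
    then obtain s0 where s0: "s0 \<in> ?I" "k s0 \<noteq> k' s0" by auto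
    define u where "u v = k (the_inv_into ?I b v) - k' (the_inv_into ?I b v)" for v
    have "(\<Sum>v\<in>b ` ?I. u v *\<^sub>R v) = (\<Sum>s\<in>?I. u (b s) *\<^sub>R b s)" using sum.reindex[OF inj] by simp
    also have "\<dots> = (\<Sum>s\<in>?I. (k s - k' s) *\<^sub>R b s)"
    proof (rule sum.cong)
      fix s assume "s \<in> ?I"
      then have "the_inv_into ?I b (b s) = s" by (rule the_inv_into_f_f[OF inj])
      then show "u (b s) *\<^sub>R b s = (k s - k' s) *\<^sub>R b s" by (simp add: u_def)
    qed simp
    also have "\<dots> = 0" using that by (simp add: scaleR_diff_left sum_subtractf)
    finally have z: "(\<Sum>v\<in>b ` ?I. u v *\<^sub>R v) = 0" .
    have "the_inv_into ?I b (b s0) = s0" by (rule the_inv_into_f_f[OF inj s0(1)])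
    then have "u (b s0) \<noteq> 0" using s0 by (simp add: u_def)
    then have "dependent (b ` ?I)"
      using dependent_finite[of "b ` ?I"] z s0(1) by blast
    then show False using ind by simp
  qed
  show ?thesis
  proof (intro exI[of _ c] conjI allI impI ballI)
    fix x show "x = (\<Sum>s=1..CARD('n). c x s *\<^sub>R b s)" by (rule c)
  next
    fix x k s assume "x = (\<Sum>s=1..CARD('n). k s *\<^sub>R b s)" "s \<in> ?I"
    then show "k s = c x s" using uniq[of k "c x"] c[of x] by metis
  qed
qed




context
  fixes L :: "(real^'n) set" and b :: "nat \<Rightarrow> real^'n"
  assumes lb: "lattice_basis L b"
begin

lemma L_eq: "L = intspan b" using lb unfolding lattice_basis_alt by auto
lemma b_inj: "inj_on b {1..CARD('n)}" using lb unfolding lattice_basis_alt by auto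
lemma b_ind: "independent (b ` {1..CARD('n)})" using lb unfolding lattice_basis_alt by auto

lemma L_0: "0 \<in> L" using L_eq intspan_0 by auto
lemma L_add: "x \<in> L \<Longrightarrow> y \<in> L \<Longrightarrow> x + y \<in> L" using L_eq intspan_add by auto
lemma L_diff: "x \<in> L \<Longrightarrow> y \<in> L \<Longrightarrow> x - y \<in> L" using L_eq intspan_diff by auto
lemma L_scale: "x \<in> L \<Longrightarrow> of_int m *\<^sub>R x \<in> L" using L_eq intspan_scale by auto
lemma L_sum: "finite A \<Longrightarrow> (\<forall>i\<in>A. f i \<in> L) \<Longrightarrow> sum f A \<in> L" using L_eq intspan_sum by auto

lemma coord_bound:
  "\<exists>B>0. \<forall>x. \<forall>k. x = (\<Sum>s=1..CARD('n). of_int (k s) *\<^sub>R b s) \<longrightarrow>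
      (\<forall>s\<in>{1..CARD('n)}. \<bar>real_of_int (k s)\<bar> \<le> B * norm x)"
proof -
  let ?I = "{1..CARD('n)}"
  obtain c where c: "\<And>x. x = (\<Sum>s=1..CARD('n). c x s *\<^sub>R b s)"
    and u: "\<And>x k s. x = (\<Sum>s=1..CARD('n). k s *\<^sub>R b s) \<Longrightarrow> s \<in> ?I \<Longrightarrow> k s = c x s"
    using coords_exist[OF b_inj b_ind] by metis
  have lin: "linear (\<lambda>x. c x s)" if s: "s \<in> ?I" for s
  proof (rule linearI)
    fix x y
    have "x + y = (\<Sum>s=1..CARD('n). (c x s + c y s) *\<^sub>R b s)"
      using c[of x] c[of y] by (simp add: sum.distrib scaleR_add_left)
    then show "c (x + y) s = c x s + c y s" using u s by metis
  next
    fix r :: real and x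
    have "r *\<^sub>R x = (\<Sum>s=1..CARD('n). (r * c x s) *\<^sub>R b s)"
      using c[of x] by (metis (no_types, lifting) scaleR_scaleR scaleR_sum_right sum.cong)
    then show "c (r *\<^sub>R x) s = r *\<^sub>R c x s" using u s by (metis real_scaleR_def)
  qed
  have "\<forall>s\<in>?I. \<exists>B>0. \<forall>x. \<bar>c x s\<bar> \<le> B * norm x"
  proof
    fix s assume "s \<in> ?I"
    from linear_bounded_pos[OF lin[OF this]] show "\<exists>B>0. \<forall>x. \<bar>c x s\<bar> \<le> B * norm x"
      by (metis real_norm_def)
  qed
  then obtain Bf where Bf: "\<And>s. s \<in> ?I \<Longrightarrow> Bf s > 0 \<and> (\<forall>x. \<bar>c x s\<bar> \<le> Bf s * norm x)"
    by metis
  define B where "B = 1 + (\<Sum>s\<in>?I. Bf s)"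
  have Bge: "Bf s \<le> B" if "s \<in> ?I" for s
  proof -
    have "Bf s \<le> (\<Sum>s\<in>?I. Bf s)"
      by (rule member_le_sum) (use Bf that in \<open>auto simp: less_imp_le\<close>)
    then show ?thesis unfolding B_def by simp
  qed
  have "B > 0" using Bge[of 1] Bf[of 1] by simp
  moreover have "\<bar>real_of_int (k s)\<bar> \<le> B * norm x"
    if "x = (\<Sum>s=1..CARD('n). of_int (k s) *\<^sub>R b s)" "s \<in> ?I" for x k s
  proof -
    have "real_of_int (k s) = c x s" using u[OF that(1) that(2)] .
    then have "\<bar>real_of_int (k s)\<bar> \<le> Bf s * norm x" using Bf[OF that(2)] by simp
    also have "\<dots> \<le> B * norm x" using Bge[OF that(2)] by (simp add: mult_right_mono)
    finally show ?thesis .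
  qed
  ultimately show ?thesis by blast
qed

lemma L_discrete: "\<exists>lam>0. \<forall>x\<in>L. x \<noteq> 0 \<longrightarrow> lam \<le> norm x"
proof -
  obtain B where B: "B > 0" and Bb: "\<And>x k s. x = (\<Sum>s=1..CARD('n). of_int (k s) *\<^sub>R b s) \<Longrightarrow>
      s \<in> {1..CARD('n)} \<Longrightarrow> \<bar>real_of_int (k s)\<bar> \<le> B * norm x"
    using coord_bound by blast
  have "1 / B \<le> norm x" if xL: "x \<in> L" and nz: "x \<noteq> 0" for x
  proof -
    obtain k where x: "x = (\<Sum>s=1..CARD('n). of_int (k s) *\<^sub>R b s)"
      using xL L_eq unfolding intspan_def by blast
    have "\<exists>s\<in>{1..CARD('n)}. k s \<noteq> 0"
    proof (rule ccontr)
      assume "\<not> ?thesis"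
      then have "x = 0" unfolding x by (intro sum.neutral) auto
      then show False using nz by simp
    qed
    then obtain s where s: "s \<in> {1..CARD('n)}" "k s \<noteq> 0" by blast
    have "1 \<le> \<bar>real_of_int (k s)\<bar>" using s(2) by linarith
    also have "\<dots> \<le> B * norm x" by (rule Bb[OF x s(1)])
    finally show ?thesis using B by (simp add: field_simps)
  qed
  then show ?thesis using B by (intro exI[of _ "1/B"]) auto
qed

lemma L_finite: "finite (L \<inter> cball 0 R)"
proof -
  obtain B where B: "B > 0" and Bb: "\<And>x k s. x = (\<Sum>s=1..CARD('n). of_int (k s) *\<^sub>R b s) \<Longrightarrow>
      s \<in> {1..CARD('n)} \<Longrightarrow> \<bar>real_of_int (k s)\<bar> \<le> B * norm x"
    using coord_bound by blast
  define N where "N = \<lceil>B * R\<rceil>"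
  let ?K = "{k :: nat \<Rightarrow> int. \<forall>s. (s \<in> {1..CARD('n)} \<longrightarrow> k s \<in> {-N..N}) \<and> (s \<notin> {1..CARD('n)} \<longrightarrow> k s = 0)}"
  have fin: "finite ?K" by (rule finite_set_of_finite_funs) auto
  have "L \<inter> cball 0 R \<subseteq> (\<lambda>k. \<Sum>s=1..CARD('n). of_int (k s) *\<^sub>R b s) ` ?K"
  proof
    fix x assume "x \<in> L \<inter> cball 0 R"
    then have xL: "x \<in> L" and xR: "norm x \<le> R" by auto
    obtain k where x: "x = (\<Sum>s=1..CARD('n). of_int (k s) *\<^sub>R b s)"
      using xL L_eq unfolding intspan_def by blast
    define k' where "k' s = (if s \<in> {1..CARD('n)} then k s else 0)" for s
    have x': "x = (\<Sum>s=1..CARD('n). of_int (k' s) *\<^sub>R b s)" unfolding x k'_def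
      by (rule sum.cong) auto
    have "k' \<in> ?K"
    proof -
      have "-N \<le> k s \<and> k s \<le> N" if "s \<in> {1..CARD('n)}" for s
      proof -
        have "\<bar>real_of_int (k s)\<bar> \<le> B * norm x" by (rule Bb[OF x that])
        also have "\<dots> \<le> B * R" using xR B by (simp add: mult_left_mono)
        finally have "real_of_int \<bar>k s\<bar> \<le> B * R" by simp
        then show ?thesis unfolding N_def by linarith
      qed
      then show ?thesis unfolding k'_def by auto
    qed
    then show "x \<in> (\<lambda>k. \<Sum>s=1..CARD('n). of_int (k s) *\<^sub>R b s) ` ?K" using x' by blast
  qed
  then show ?thesis using fin finite_subset by blast
qed

end



context
  fixes L :: "(real^'n) set" and b :: "nat \<Rightarrow> real^'n"
  assumes lb: "lattice_basis L b"
begin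

definition Rset :: "nat \<Rightarrow> real set" where
  "Rset s = {r. r > 0 \<and> (\<exists>S. S \<subseteq> L \<inter> cball 0 r \<and> independent S \<and> card S = s)}"

lemma sm_eq: "succ_min L s = Inf (Rset s)" unfolding succ_min_def Rset_def by simp

lemma R_bdd: "bdd_below (Rset s)" unfolding Rset_def bdd_below_def
  by (rule exI[of _ 0]) auto

lemma R_ne: assumes "s \<le> CARD('n)" shows "Rset s \<noteq> {}"
proof -
  let ?I = "{1..CARD('n)}"
  define r0 where "r0 = 1 + (\<Sum>t\<in>?I. norm (b t))"
  have "card (b ` ?I) = CARD('n)" using b_inj[OF lb] by (simp add: card_image)
  then obtain T where T: "T \<subseteq> b ` ?I" "card T = s" using obtain_subset_with_card_n[of s "b ` ?I"] assms
    by metis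
  have "independent T" using independent_mono[OF b_ind[OF lb] T(1)] .
  moreover have "T \<subseteq> L \<inter> cball 0 r0"
  proof
    fix x assume "x \<in> T"
    then obtain t where t: "t \<in> ?I" "x = b t" using T(1) by auto
    have "x \<in> L" using t L_eq[OF lb] intspan_gen[of t b] by simp
    moreover have "norm (b t) \<le> (\<Sum>t\<in>?I. norm (b t))" by (rule member_le_sum) (use t in auto)
    ultimately show "x \<in> L \<inter> cball 0 r0" using t unfolding r0_def by auto
  qed
  moreover have "r0 > 0" unfolding r0_def by (simp add: add_pos_nonneg sum_nonneg)
  ultimately have "r0 \<in> Rset s" unfolding Rset_def using T(2) by blast
  then show ?thesis by blast
qed

lemma sm_pos: assumes "1 \<le> s" "s \<le> CARD('n)" shows "0 < succ_min L s"
proof -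
  obtain lam where lam: "lam > 0" "\<And>x. x \<in> L \<Longrightarrow> x \<noteq> 0 \<Longrightarrow> lam \<le> norm x"
    using L_discrete[OF lb] by blast
  have "lam \<le> Inf (Rset s)"
  proof (rule cInf_greatest[OF R_ne[OF assms(2)]])
    fix r assume "r \<in> Rset s"
    then obtain S where S: "S \<subseteq> L \<inter> cball 0 r" "independent S" "card S = s" unfolding Rset_def by blast
    then have "S \<noteq> {}" using assms(1) by auto
    then obtain x where x: "x \<in> S" by blast
    have "x \<noteq> 0" using S(2) x dependent_zero by blast
    then have "lam \<le> norm x" using lam(2) x S(1) by auto
    also have "\<dots> \<le> r" using x S(1) by auto
    finally show "lam \<le> r" .
  qed
  then show ?thesis using lam(1) sm_eq by simp
qed

lemma sm_mono: assumes "s \<le> s'" "s' \<le> CARD('n)" shows "succ_min L s \<le> succ_min L s'"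
proof -
  have "Rset s' \<subseteq> Rset s"
  proof
    fix r assume "r \<in> Rset s'"
    then obtain S where S: "r > 0" "S \<subseteq> L \<inter> cball 0 r" "independent S" "card S = s'"
      unfolding Rset_def by blast
    obtain T where T: "T \<subseteq> S" "card T = s" using obtain_subset_with_card_n[of s S] S(4) assms(1) by metis
    show "r \<in> Rset s" unfolding Rset_def using S T independent_mono[OF S(3) T(1)] by blast
  qed
  then show ?thesis unfolding sm_eq using cInf_superset_mono[OF R_ne[OF assms(2)] R_bdd] by blast
qed

lemma sm_approx: assumes "1 \<le> s" "s \<le> CARD('n)"
  shows "\<exists>S. S \<subseteq> L \<inter> cball 0 (2 * succ_min L s) \<and> independent S \<and> card S = s"
proof -
  have "Inf (Rset s) < 2 * succ_min L s" using sm_pos[OF assms] sm_eq by simp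
  then obtain r where r: "r \<in> Rset s" "r < 2 * succ_min L s" using cInf_lessD[OF R_ne[OF assms(2)]] by blast
  then obtain S where S: "S \<subseteq> L \<inter> cball 0 r" "independent S" "card S = s" unfolding Rset_def by blast
  have "cball (0::real^'n) r \<subseteq> cball 0 (2 * succ_min L s)" using r(2) by auto
  then show ?thesis using S by blast
qed

lemma u_exists: "\<exists>u. inj_on u {1..CARD('n)} \<and> independent (u ` {1..CARD('n)}) \<and>
   (\<forall>s\<in>{1..CARD('n)}. u s \<in> L \<and> norm (u s) \<le> 2 * succ_min L s)"
proof -
  let ?I = "{1..CARD('n)}"
  have "\<forall>s\<in>?I. \<exists>S. S \<subseteq> L \<inter> cball 0 (2 * succ_min L s) \<and> independent S \<and> card S = s"
    using sm_approx by auto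
  from bchoice[OF this] obtain Sf where Sf0: "\<forall>s\<in>?I. Sf s \<subseteq> L \<inter> cball 0 (2 * succ_min L s) \<and> independent (Sf s) \<and> card (Sf s) = s"
    by blast
  have Sf: "Sf s \<subseteq> L \<inter> cball 0 (2 * succ_min L s) \<and> independent (Sf s) \<and> card (Sf s) = s" if "s \<in> ?I" for s
    using Sf0 that by blast
  have ind: "k \<le> CARD('n) \<Longrightarrow> \<exists>u. inj_on u {1..k} \<and> independent (u ` {1..k}) \<and> (\<forall>s\<in>{1..k}. u s \<in> Sf s)" for k
  proof (induction k)
    case 0 then show ?case by (intro exI[of _ "\<lambda>_. 0"]) (auto simp: independent_empty)
  next
    case (Suc k)
    have "k \<le> CARD('n)" using Suc.prems by simp
    then obtain u where u: "inj_on u {1..k}" "independent (u ` {1..k})" "\<forall>s\<in>{1..k}. u s \<in> Sf s" using Suc.IH by blast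
    have sk: "Suc k \<in> ?I" using Suc.prems by auto
    have "\<not> Sf (Suc k) \<subseteq> span (u ` {1..k})"
    proof
      assume sub: "Sf (Suc k) \<subseteq> span (u ` {1..k})"
      have "card (Sf (Suc k)) \<le> dim (span (u ` {1..k}))"
        using independent_card_le_dim[OF sub] Sf[OF sk] by simp
      also have "\<dots> = dim (u ` {1..k})" by (simp add: dim_span)
      also have "\<dots> \<le> card (u ` {1..k})" by (simp add: dim_le_card')
      also have "\<dots> \<le> k" using card_image_le[of "{1..k}" u] by simp
      finally show False using Sf[OF sk] by simp
    qed
    then obtain x where x: "x \<in> Sf (Suc k)" "x \<notin> span (u ` {1..k})" by blast
    define u' where "u' = u(Suc k := x)"
    have eqk: "u' ` {1..k} = u ` {1..k}" unfolding u'_def by (intro image_cong) auto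
    have ins: "{1..Suc k} = insert (Suc k) {1..k}" by auto
    have img: "u' ` {1..Suc k} = insert x (u ` {1..k})" unfolding ins image_insert eqk by (simp add: u'_def)
    have xn: "x \<notin> u ` {1..k}" using x(2) span_base[of x "u ` {1..k}"] by blast
    have "inj_on u' {1..k} = inj_on u {1..k}" by (rule inj_on_cong) (auto simp: u'_def)
    then have i1: "inj_on u' {1..k}" using u(1) by simp
    have "u' (Suc k) \<notin> u' ` ({1..k} - {Suc k})" using xn eqk by (simp add: u'_def)
    then have "inj_on u' {1..Suc k}" unfolding ins inj_on_insert using i1 by blast
    moreover have "independent (u' ` {1..Suc k})" unfolding img using u(2) x(2) xn
      by (simp add: independent_insert)
    moreover have "\<forall>s\<in>{1..Suc k}. u' s \<in> Sf s" using u(3) x(1) unfolding u'_def ins by simp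
    ultimately show ?case by (intro exI[of _ u']) blast
  qed
  obtain u where u: "inj_on u ?I" "independent (u ` ?I)" "\<forall>s\<in>?I. u s \<in> Sf s" using ind[of "CARD('n)"] by blast
  have "\<forall>s\<in>?I. u s \<in> L \<and> norm (u s) \<le> 2 * succ_min L s"
  proof
    fix s assume s: "s \<in> ?I"
    have "u s \<in> L \<inter> cball 0 (2 * succ_min L s)" using u(3) Sf[OF s] s by blast
    then show "u s \<in> L \<and> norm (u s) \<le> 2 * succ_min L s" by simp
  qed
  then show ?thesis using u(1,2) by blast
qed

end



lemma norm_combo_le:
  fixes u :: "nat \<Rightarrow> real^'n"
  shows "norm (\<Sum>t\<in>A. c t *\<^sub>R u t) \<le> (\<Sum>t\<in>A. \<bar>c t\<bar> * norm (u t))"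
  by (rule order_trans[OF norm_sum]) simp

lemma finite_min_ex:
  fixes f :: "'a \<Rightarrow> real"
  assumes "finite P" "P \<noteq> {}"
  shows "\<exists>x\<in>P. \<forall>y\<in>P. f x \<le> f y"
proof -
  have "Min (f ` P) \<in> f ` P" using assms by simp
  then obtain x where x: "x \<in> P" "f x = Min (f ` P)" by auto
  have "\<forall>y\<in>P. f x \<le> f y" using x(2) assms(1) by simp
  then show ?thesis using x(1) by blast
qed

context
  fixes L :: "(real^'n) set" and b :: "nat \<Rightarrow> real^'n"
  assumes lb: "lattice_basis L b"
begin

lemma w_exists: "\<exists>w. L = intspan w \<and> (\<forall>s\<in>{1..CARD('n)}. norm (w s) \<le> 2 * CARD('n) * succ_min L s)"
proof -
  let ?I = "{1..CARD('n)}"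
  let ?d = "CARD('n)"
  obtain u where u_inj: "inj_on u ?I" and u_ind: "independent (u ` ?I)"
    and uLn: "\<forall>s\<in>?I. u s \<in> L \<and> norm (u s) \<le> 2 * succ_min L s"
    using u_exists[OF lb] by blast
  have uL: "u s \<in> L" and un: "norm (u s) \<le> 2 * succ_min L s" if "s \<in> ?I" for s
    using uLn that by auto
  obtain cu where cu_repr0: "\<forall>x. x = (\<Sum>t\<in>?I. cu x t *\<^sub>R u t)"
    and cu_un0: "\<forall>x k. x = (\<Sum>t\<in>?I. k t *\<^sub>R u t) \<longrightarrow> (\<forall>t\<in>?I. k t = cu x t)"
    using coords_exist[OF u_inj u_ind] by blast
  have cu_repr': "(\<Sum>t\<in>?I. cu x t *\<^sub>R u t) = x" for x by (rule sym[OF spec[OF cu_repr0]])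
  have cu_un: "k t = cu x t" if "x = (\<Sum>t\<in>?I. k t *\<^sub>R u t)" "t \<in> ?I" for x k t
    using cu_un0 that by blast
  have cu_lin: "cu (x - r *\<^sub>R y) t = cu x t - r * cu y t" if "t \<in> ?I" for x y r t
  proof -
    have "(\<Sum>t\<in>?I. (cu x t - r * cu y t) *\<^sub>R u t) = (\<Sum>t\<in>?I. cu x t *\<^sub>R u t) - r *\<^sub>R (\<Sum>t\<in>?I. cu y t *\<^sub>R u t)"
      by (simp add: scaleR_sum_right scaleR_diff_left sum_subtractf)
    then have "(\<Sum>t\<in>?I. (cu x t - r * cu y t) *\<^sub>R u t) = x - r *\<^sub>R y" by (simp only: cu_repr')
    from cu_un[OF this[symmetric] that] show ?thesis by simp
  qed
  have cu_u: "cu (u s) t = (if t = s then 1 else 0)" if "s \<in> ?I" "t \<in> ?I" for s t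
  proof -
    have "(\<Sum>t\<in>?I. (if t = s then 1 else 0) *\<^sub>R u t) = (\<Sum>t\<in>?I. (if t = s then u t else 0))"
      by (rule sum.cong) auto
    also have "\<dots> = u s" using that(1) by (simp add: sum.delta)
    finally show ?thesis using cu_un[of "u s" "\<lambda>t. if t = s then 1 else 0" t] that(2) by simp
  qed
  define V where "V s = {x. \<forall>t\<in>?I. s < t \<longrightarrow> cu x t = 0}" for s
  define P where "P s = {x \<in> L. x \<in> V s \<and> 0 < cu x s \<and> cu x s \<le> 1 \<and>
      (\<forall>t\<in>?I. t < s \<longrightarrow> 0 \<le> cu x t \<and> cu x t < 1)}" for s
  define M where "M = (\<Sum>t\<in>?I. norm (u t))"
  have Pcoef: "\<bar>cu x t\<bar> \<le> 1 \<and> (s < t \<longrightarrow> cu x t = 0)" if "x \<in> P s" "t \<in> ?I" for x s t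
  proof (cases "t < s")
    case True then show ?thesis using that unfolding P_def by auto
  next
    case False
    then show ?thesis using that unfolding P_def V_def
      by (cases "t = s") auto
  qed
  have Pnorm: "norm x \<le> (\<Sum>t\<in>?I. \<bar>cu x t\<bar> * norm (u t))" for x
    using norm_combo_le[of "cu x" u ?I] unfolding cu_repr' .
  have Pfin: "finite (P s)" for s
  proof -
    have "P s \<subseteq> L \<inter> cball 0 M"
    proof
      fix x assume x: "x \<in> P s"
      have "norm x \<le> (\<Sum>t\<in>?I. \<bar>cu x t\<bar> * norm (u t))" by (rule Pnorm)
      also have "\<dots> \<le> M" unfolding M_def
        by (rule sum_mono) (use Pcoef[OF x] in \<open>auto intro: mult_left_le_one_le\<close>)
      finally show "x \<in> L \<inter> cball 0 M" using x unfolding P_def by auto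
    qed
    then show ?thesis using L_finite[OF lb] finite_subset by blast
  qed
  have Pne: "u s \<in> P s" if s: "s \<in> ?I" for s
    using s uL[OF s] unfolding P_def V_def by (auto simp: cu_u)
  have "\<forall>s\<in>?I. \<exists>x. x \<in> P s \<and> (\<forall>y\<in>P s. cu x s \<le> cu y s)"
  proof
    fix s assume "s \<in> ?I"
    then have "P s \<noteq> {}" using Pne by blast
    from finite_min_ex[OF Pfin this, of "\<lambda>x. cu x s"]
    show "\<exists>x. x \<in> P s \<and> (\<forall>y\<in>P s. cu x s \<le> cu y s)" by blast
  qed
  from bchoice[OF this] obtain w where w0: "\<forall>s\<in>?I. w s \<in> P s \<and> (\<forall>y\<in>P s. cu (w s) s \<le> cu y s)"
    by blast
  have w: "w s \<in> P s \<and> (\<forall>y\<in>P s. cu (w s) s \<le> cu y s)" if "s \<in> ?I" for s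
    using w0 that by blast
  have minimal: "cu (w s) s \<le> cu x s"
    if s: "s \<in> ?I" and x: "x \<in> L" "x \<in> V s" "0 < cu x s" "cu x s \<le> 1" for s x
  proof -
    define k where "k t = (if t < s then \<lfloor>cu x t\<rfloor> else 0)" for t
    define y where "y = (\<Sum>t\<in>?I. of_int (k t) *\<^sub>R u t)"
    have yL: "y \<in> L" unfolding y_def using uL by (intro L_sum[OF lb]) (auto intro: L_scale[OF lb])
    have cy: "cu y t = of_int (k t)" if "t \<in> ?I" for t
      using cu_un[of y "\<lambda>t. of_int (k t)" t] that y_def by simp
    have cx': "cu (x - y) t = cu x t - of_int (k t)" if "t \<in> ?I" for t
      using cu_lin[OF that, of x 1 y] cy[OF that] by simp
    have "x - y \<in> P s" unfolding P_def
    proof (intro CollectI conjI)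
      show "x - y \<in> L" using L_diff[OF lb x(1) yL] .
      show "x - y \<in> V s" using x(2) unfolding V_def by (auto simp: cx' k_def)
      show "0 < cu (x - y) s" using x(3) s by (simp add: cx' k_def)
      show "cu (x - y) s \<le> 1" using x(4) s by (simp add: cx' k_def)
      show "\<forall>t\<in>?I. t < s \<longrightarrow> 0 \<le> cu (x - y) t \<and> cu (x - y) t < 1"
        by (auto simp: cx' k_def) linarith+
    qed
    then have "cu (w s) s \<le> cu (x - y) s" using w[OF s] by blast
    also have "\<dots> = cu x s" using s by (simp add: cx' k_def)
    finally show ?thesis .
  qed
  have main: "s \<le> ?d \<Longrightarrow> \<forall>x\<in>L. x \<in> V s \<longrightarrow> x \<in> intspan w" for s
  proof (induction s)
    case 0
    show ?case
    proof (intro ballI impI)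
      fix x assume "x \<in> L" "x \<in> V 0"
      then have "\<forall>t\<in>?I. cu x t = 0" unfolding V_def by auto
      then have "(\<Sum>t\<in>?I. cu x t *\<^sub>R u t) = 0" by (intro sum.neutral) simp
      then have "x = 0" by (simp only: cu_repr')
      then show "x \<in> intspan w" using intspan_0 by simp
    qed
  next
    case (Suc s)
    let ?S = "Suc s"
    have S: "?S \<in> ?I" using Suc.prems by simp
    have wS: "w ?S \<in> P ?S" and wmin: "\<forall>y\<in>P ?S. cu (w ?S) ?S \<le> cu y ?S" using w[OF S] by auto
    define mu where "mu = cu (w ?S) ?S"
    have mu: "0 < mu" "mu \<le> 1" using wS unfolding P_def mu_def by auto
    have IH: "\<forall>x\<in>L. x \<in> V s \<longrightarrow> x \<in> intspan w" using Suc by simp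
    show ?case
    proof (intro ballI impI)
      fix x assume xL: "x \<in> L" and xV: "x \<in> V ?S"
      define q where "q = \<lfloor>cu x ?S / mu\<rfloor>"
      define x' where "x' = x - of_int q *\<^sub>R w ?S"
      have cx': "cu x' t = cu x t - of_int q * cu (w ?S) t" if "t \<in> ?I" for t
        unfolding x'_def using cu_lin[OF that] by simp
      have x'L: "x' \<in> L" unfolding x'_def
        using L_diff[OF lb xL L_scale[OF lb, of "w ?S" q]] wS unfolding P_def by auto
      have x'V: "x' \<in> V ?S" using xV wS unfolding V_def P_def by (auto simp: cx')
      have q1: "of_int q \<le> cu x ?S / mu" "cu x ?S / mu < of_int q + 1" unfolding q_def by linarith+
      have lo: "0 \<le> cu x' ?S" and hi: "cu x' ?S < mu"
      proof -
        have "of_int q * mu \<le> cu x ?S" using q1(1) mu(1) by (simp add: pos_le_divide_eq)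
        then show "0 \<le> cu x' ?S" using cx'[OF S] mu_def by simp
        have "cu x ?S < (of_int q + 1) * mu" using q1(2) mu(1) by (simp add: pos_divide_less_eq)
        then show "cu x' ?S < mu" using cx'[OF S] mu_def by (simp add: algebra_simps)
      qed
      have z: "cu x' ?S = 0"
      proof (rule ccontr)
        assume "cu x' ?S \<noteq> 0"
        then have "0 < cu x' ?S" using lo by simp
        then have "mu \<le> cu x' ?S" using minimal[OF S x'L x'V] hi mu unfolding mu_def by simp
        then show False using hi by simp
      qed
      have "x' \<in> V s" unfolding V_def mem_Collect_eq
      proof (intro ballI impI)
        fix t assume t: "t \<in> ?I" "s < t"
        show "cu x' t = 0"
        proof (cases "t = ?S")
          case True then show ?thesis using z by simp
        next
          case False then show ?thesis using x'V t unfolding V_def by auto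
        qed
      qed
      then have "x' \<in> intspan w" using IH x'L by blast
      moreover have "of_int q *\<^sub>R w ?S \<in> intspan w" using intspan_scale intspan_gen[OF S] by blast
      ultimately have "x' + of_int q *\<^sub>R w ?S \<in> intspan w" by (rule intspan_add)
      then show "x \<in> intspan w" unfolding x'_def by simp
    qed
  qed
  have "L \<subseteq> intspan w"
  proof
    fix x assume "x \<in> L"
    moreover have "x \<in> V ?d" unfolding V_def by auto
    ultimately show "x \<in> intspan w" using main[of ?d] by simp
  qed
  moreover have "intspan w \<subseteq> L"
    using intspan_subset[of w b] w L_eq[OF lb] unfolding P_def by auto
  moreover have "norm (w s) \<le> 2 * ?d * succ_min L s" if s: "s \<in> ?I" for s
  proof -
    have wP: "w s \<in> P s" using w[OF s] by blast
    have "norm (w s) \<le> (\<Sum>t\<in>?I. \<bar>cu (w s) t\<bar> * norm (u t))" by (rule Pnorm)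
    also have "\<dots> \<le> of_nat (card ?I) * (2 * succ_min L s)"
    proof (rule sum_bounded_above)
      fix t assume t: "t \<in> ?I"
      show "\<bar>cu (w s) t\<bar> * norm (u t) \<le> 2 * succ_min L s"
      proof (cases "s < t")
        case True
        then show ?thesis using Pcoef[OF wP t] sm_pos[OF lb, of s] s by simp
      next
        case False
        have "norm (u t) \<le> 2 * succ_min L t" by (rule un[OF t])
        also have "\<dots> \<le> 2 * succ_min L s" using sm_mono[OF lb, of t s] False s by simp
        finally have "norm (u t) \<le> 2 * succ_min L s" .
        moreover have "\<bar>cu (w s) t\<bar> \<le> 1" using Pcoef[OF wP t] by simp
        ultimately show ?thesis by (simp add: mult_le_one order_trans[OF mult_left_le_one_le])
      qed
    qed
    finally show ?thesis by simp
  qed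
  ultimately show ?thesis by blast
qed

end



lemma supp_choice:
  fixes v w :: "real^'n"
  shows "\<exists>c::nat. c \<le> CARD('n) \<and> supp_vec v \<subseteq> supp_vec (w + of_nat c *\<^sub>R v)"
proof (rule ccontr)
  assume "\<not> ?thesis"
  then have "\<forall>c\<in>{0..CARD('n)}. \<exists>h. h \<in> supp_vec v \<and> h \<notin> supp_vec (w + of_nat c *\<^sub>R v)"
    by auto
  from bchoice[OF this] obtain h where h: "\<forall>c\<in>{0..CARD('n)}. h c \<in> supp_vec v \<and> h c \<notin> supp_vec (w + of_nat c *\<^sub>R v)"
    by blast
  have hz: "v $ h c \<noteq> 0 \<and> w $ h c + of_nat c * v $ h c = 0" if "c \<in> {0..CARD('n)}" for c
    using h that unfolding supp_vec_def by auto
  have "inj_on h {0..CARD('n)}"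
  proof (rule inj_onI)
    fix c1 c2 assume c: "c1 \<in> {0..CARD('n)}" "c2 \<in> {0..CARD('n)}" "h c1 = h c2"
    have e1: "w $ h c1 + real c1 * v $ h c1 = 0" and nz: "v $ h c1 \<noteq> 0" using hz[OF c(1)] by auto
    have e2: "w $ h c1 + real c2 * v $ h c1 = 0" using hz[OF c(2)] c(3) by simp
    have "real c1 * v $ h c1 = real c2 * v $ h c1" using e1 e2 by linarith
    then have "real c1 = real c2" using nz by simp
    then show "c1 = c2" by simp
  qed
  from card_inj_on_le[OF this, of UNIV] have "card {0..CARD('n)} \<le> CARD('n)" by simp
  then show False by simp
qed

context
  fixes L :: "(real^'n) set" and b :: "nat \<Rightarrow> real^'n"
  assumes lb: "lattice_basis L b"
begin

lemma v_exists:
  "\<exists>v. lattice_basis L v \<and>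
     (\<forall>s\<in>{1..CARD('n)}. norm (v s) \<le> (2 * CARD('n) * (CARD('n) + 1) ^ CARD('n)) * succ_min L s) \<and>
     (\<forall>s\<in>{1..<CARD('n)}. supp_vec (v s) \<subseteq> supp_vec (v (Suc s)))"
proof -
  let ?I = "{1..CARD('n)}"
  let ?d = "CARD('n)"
  define A :: "nat \<Rightarrow> real" where "A t = 2 * real ?d * (real ?d + 1) ^ t" for t
  obtain w where wL: "L = intspan w" and wn: "\<forall>s\<in>?I. norm (w s) \<le> 2 * ?d * succ_min L s"
    using w_exists[OF lb] by blast
  have Apos: "2 * real ?d \<le> A t" for t
  proof -
    have "1 \<le> (real ?d + 1) ^ t" by simp
    then show ?thesis unfolding A_def by simp
  qed
  have Astep: "A (Suc t) = real ?d * A t + A t" for t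
    unfolding A_def by (simp add: algebra_simps)
  have ind: "1 \<le> k \<Longrightarrow> k \<le> ?d \<Longrightarrow> \<exists>v. intspan v = intspan w \<and> (\<forall>t\<in>?I. k < t \<longrightarrow> v t = w t) \<and>
     (\<forall>t\<in>{1..k}. norm (v t) \<le> A t * succ_min L t) \<and> (\<forall>t\<in>{1..<k}. supp_vec (v t) \<subseteq> supp_vec (v (Suc t)))" for k
  proof (induction k)
    case 0 then show ?case by simp
  next
    case (Suc k)
    show ?case
    proof (cases "k = 0")
      case True
      have "norm (w 1) \<le> 2 * ?d * succ_min L 1" using wn Suc.prems by auto
      also have "\<dots> \<le> A 1 * succ_min L 1"
        using Apos[of 1] sm_pos[OF lb, of 1] Suc.prems by (intro mult_right_mono) auto
      finally show ?thesis using True by (intro exI[of _ w]) auto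
    next
      case False
      then have k1: "1 \<le> k" "k \<le> ?d" using Suc.prems by auto
      then obtain v where v: "intspan v = intspan w" "\<forall>t\<in>?I. k < t \<longrightarrow> v t = w t"
        "\<forall>t\<in>{1..k}. norm (v t) \<le> A t * succ_min L t" "\<forall>t\<in>{1..<k}. supp_vec (v t) \<subseteq> supp_vec (v (Suc t))"
        using Suc.IH by blast
      have kI: "k \<in> ?I" and SI: "Suc k \<in> ?I" using k1 Suc.prems by auto
      obtain c :: nat where c: "c \<le> ?d" "supp_vec (v k) \<subseteq> supp_vec (w (Suc k) + of_nat c *\<^sub>R v k)"
        using supp_choice by blast
      define v' where "v' = v(Suc k := w (Suc k) + of_nat c *\<^sub>R v k)"
      have vS: "v (Suc k) = w (Suc k)" using v(2) SI by simp
      have v'k: "v' k = v k" unfolding v'_def by simp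
      have v'S: "v' (Suc k) = v (Suc k) + of_int (int c) *\<^sub>R v k" unfolding v'_def using vS by simp
      have "intspan v' \<subseteq> intspan v"
      proof (rule intspan_subset, rule ballI)
        fix t assume t: "t \<in> ?I"
        show "v' t \<in> intspan v"
        proof (cases "t = Suc k")
          case True
          then show ?thesis using v'S intspan_add[OF intspan_gen[OF SI] intspan_scale[where m="int c", OF intspan_gen[OF kI]]]
            by simp
        next
          case False
          then show ?thesis using intspan_gen[OF t, of v] unfolding v'_def by simp
        qed
      qed
      moreover have "intspan v \<subseteq> intspan v'"
      proof (rule intspan_subset, rule ballI)
        fix t assume t: "t \<in> ?I"
        show "v t \<in> intspan v'"
        proof (cases "t = Suc k")
          case True
          have "v (Suc k) = v' (Suc k) - of_int (int c) *\<^sub>R v' k" using v'S v'k by simp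
          then show ?thesis using True intspan_diff[OF intspan_gen[OF SI] intspan_scale[where m="int c", OF intspan_gen[OF kI]]]
            by simp
        next
          case False
          then have "v t = v' t" unfolding v'_def by simp
          then show ?thesis using intspan_gen[OF t, of v'] by simp
        qed
      qed
      ultimately have sp: "intspan v' = intspan w" using v(1) by blast
      have tail: "\<forall>t\<in>?I. Suc k < t \<longrightarrow> v' t = w t" using v(2) unfolding v'_def by auto
      have nS: "norm (v' (Suc k)) \<le> A (Suc k) * succ_min L (Suc k)"
      proof -
        have dpos: "0 < succ_min L (Suc k)" using sm_pos[OF lb, of "Suc k"] SI by simp
        have dk: "0 < succ_min L k" using sm_pos[OF lb, of k] kI by simp
        have mono: "succ_min L k \<le> succ_min L (Suc k)" using sm_mono[OF lb, of k "Suc k"] SI by simp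
        have "norm (v' (Suc k)) \<le> norm (w (Suc k)) + real c * norm (v k)"
          unfolding v'_def by (simp add: norm_triangle_le)
        also have "\<dots> \<le> 2 * ?d * succ_min L (Suc k) + real ?d * (A k * succ_min L k)"
        proof (rule add_mono)
          show "norm (w (Suc k)) \<le> 2 * ?d * succ_min L (Suc k)" using wn SI by blast
          have "norm (v k) \<le> A k * succ_min L k" using v(3) kI k1 by auto
          then show "real c * norm (v k) \<le> real ?d * (A k * succ_min L k)"
            using c(1) by (intro mult_mono) auto
        qed
        also have "\<dots> \<le> 2 * ?d * succ_min L (Suc k) + real ?d * (A k * succ_min L (Suc k))"
          using mono Apos[of k] by (intro add_left_mono mult_left_mono) auto
        also have "\<dots> \<le> A (Suc k) * succ_min L (Suc k)"
        proof -
          have le: "2 * real ?d + real ?d * A k \<le> A (Suc k)" using Astep[of k] Apos[of k] by simp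
          have "2 * real ?d * succ_min L (Suc k) + real ?d * (A k * succ_min L (Suc k)) =
              (2 * real ?d + real ?d * A k) * succ_min L (Suc k)" by (simp add: algebra_simps)
          also have "\<dots> \<le> A (Suc k) * succ_min L (Suc k)" using le dpos by (intro mult_right_mono) auto
          finally show ?thesis by simp
        qed
        finally show ?thesis .
      qed
      have norms: "\<forall>t\<in>{1..Suc k}. norm (v' t) \<le> A t * succ_min L t"
      proof
        fix t assume t: "t \<in> {1..Suc k}"
        show "norm (v' t) \<le> A t * succ_min L t"
        proof (cases "t = Suc k")
          case True then show ?thesis using nS by simp
        next
          case False then show ?thesis using v(3) t unfolding v'_def by auto
        qed
      qed
      have supps: "\<forall>t\<in>{1..<Suc k}. supp_vec (v' t) \<subseteq> supp_vec (v' (Suc t))"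
      proof
        fix t assume t: "t \<in> {1..<Suc k}"
        show "supp_vec (v' t) \<subseteq> supp_vec (v' (Suc t))"
        proof (cases "t = k")
          case True then show ?thesis using c(2) unfolding v'_def by simp
        next
          case False then show ?thesis using v(4) t unfolding v'_def by auto
        qed
      qed
      show ?thesis using sp tail norms supps by blast
    qed
  qed
  have "1 \<le> ?d" by (simp add: Suc_leI)
  then obtain v where v: "intspan v = intspan w"
     "\<forall>t\<in>{1..?d}. norm (v t) \<le> A t * succ_min L t" "\<forall>t\<in>{1..<?d}. supp_vec (v t) \<subseteq> supp_vec (v (Suc t))"
    using ind[of ?d] by blast
  have "L = intspan v" using wL v(1) by simp
  then have "lattice_basis L v" by (rule basis_from_spanning[OF lb])
  moreover have "norm (v s) \<le> (2 * ?d * (?d + 1) ^ ?d) * succ_min L s" if s: "s \<in> ?I" for s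
  proof -
    have "norm (v s) \<le> A s * succ_min L s" using v(2) s by blast
    also have "\<dots> \<le> (2 * ?d * (?d + 1) ^ ?d) * succ_min L s"
    proof (rule mult_right_mono)
      have "(real ?d + 1) ^ s \<le> (real ?d + 1) ^ ?d" using s by (intro power_increasing) auto
      then show "A s \<le> real (2 * ?d * (?d + 1) ^ ?d)" unfolding A_def by (simp add: add.commute)
      show "0 \<le> succ_min L s" using sm_pos[OF lb, of s] s by simp
    qed
    finally show ?thesis by simp
  qed
  ultimately show ?thesis using v(3) by blast
qed

end


theorem mainTheorem7:
  shows "\<exists>C > 0. \<forall>L :: (real^'n) set. full_rank_lattice L \<longrightarrow>
           (\<exists>v. lattice_basis L v \<and>
                (\<forall>s\<in>{1..CARD('n)}. norm (v s) \<le> C * succ_min L s) \<and>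
                (\<forall>s\<in>{1..<CARD('n)}. supp_vec (v s) \<subseteq> supp_vec (v (Suc s))))"
proof (intro exI[of _ "2 * real CARD('n) * (real CARD('n) + 1) ^ CARD('n)"] conjI allI impI)
  show "0 < 2 * real CARD('n) * (real CARD('n) + 1) ^ CARD('n)" by simp
next
  fix L :: "(real^'n) set" assume "full_rank_lattice L"
  then obtain b where lb: "lattice_basis L b" unfolding full_rank_lattice_def by blast
  show "\<exists>v. lattice_basis L v \<and>
                (\<forall>s\<in>{1..CARD('n)}. norm (v s) \<le> (2 * real CARD('n) * (real CARD('n) + 1) ^ CARD('n)) * succ_min L s) \<and>
                (\<forall>s\<in>{1..<CARD('n)}. supp_vec (v s) \<subseteq> supp_vec (v (Suc s)))"
    using v_exists[OF lb] by (simp add: add.commute)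
qed

end
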